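(* Let $\ell$ be a positive integer and let $r_i=(a_i,b_i,c_i,d_i)\in\mathbb{Z}^4$, $i=1,2,3,4$, satisfy $a_ia_j+b_ib_j+c_ic_j+d_id_j=\delta_{ij}\ell$ for all $i,j\in\{1,2,3,4\}$. Let $D_i=\gcd(a_i,b_i,c_i,d_i)$ and assume $\gcd(D_1,D_2,D_3,D_4)=1$. Let $H=\{\sum_{i=1}^4 s_ir_i: s_i\in[0,1]\}$ be the hypercube spanned by the rows, and write its Ehrhart polynomial as $E_{H}(t)=\ell^2t^4+\alpha_1t^3+\alpha_2t^2+\alpha_3t+1$. Then $\alpha_1=\ell(D_1+D_2+D_3+D_4)$.
   Context: $\delta_{ij}$ is the Kronecker delta. The Ehrhart polynomial $E_H$ is the polynomial with $E_H(t)=\#(tH\cap\mathbb{Z}^4)$ for all positive integers $t$. *)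

theory Defs
  imports "HOL-Analysis.Analysis" "HOL-Computational_Algebra.Polynomial"
begin

text \<open>The rows r 1,...,r 4 of an integer 4x4 matrix are encoded as r :: int^4^4,
  with row i being r $ i and its coordinates r $ i $ j.\<close>

definition row_gcd :: "int^4^4 \<Rightarrow> 4 \<Rightarrow> int" where
  "row_gcd r i = Gcd (range (\<lambda>j. r $ i $ j))"

definition hypercube :: "int^4^4 \<Rightarrow> (real^4) set" where
  "hypercube r = {x. \<exists>s :: real^4. (\<forall>i. 0 \<le> s $ i \<and> s $ i \<le> 1) \<and>
       x = (\<Sum>i\<in>UNIV. s $ i *\<^sub>R (\<chi> j. real_of_int (r $ i $ j)))}"

definition lattice_count :: "(real^4) set \<Rightarrow> nat \<Rightarrow> nat" where
  "lattice_count H t = card {z :: int^4. (\<chi> j. real_of_int (z $ j)) \<in> (\<lambda>x. real t *\<^sub>R x) ` H}"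

end

theory Submission
  imports Defs
begin
locale hc =
  fixes l :: int and r :: "int^4^4"
  assumes l_pos: "l > 0"
    and orth: "\<And>i j. (\<Sum>k\<in>UNIV. r $ i $ k * r $ j $ k) = (if i = j then l else 0)"
begin

lemma col_orth: "(\<Sum>i\<in>UNIV. r $ i $ k * r $ i $ m) = (if k = m then l else 0)"
proof -
  define M :: "real^4^4" where "M = (\<chi> i j. real_of_int (r $ i $ j))"
  define N :: "real^4^4" where "N = (\<chi> i j. M $ i $ j / real_of_int l)"
  have lne: "real_of_int l \<noteq> 0" using l_pos by simp
  have "N ** transpose M = mat 1"
  proof -
    have "(N ** transpose M) $ i $ j = mat 1 $ i $ j" for i j
    proof -
      have "(N ** transpose M) $ i $ j = (\<Sum>k\<in>UNIV. real_of_int (r $ i $ k * r $ j $ k)) / real_of_int l"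
        by (simp add: matrix_matrix_mult_def N_def M_def transpose_def sum_divide_distrib)
      also have "\<dots> = real_of_int (if i = j then l else 0) / real_of_int l"
        by (simp only: of_int_sum[symmetric] orth)
      finally show ?thesis using lne by (simp add: mat_def)
    qed
    then show ?thesis by (simp add: vec_eq_iff)
  qed
  then have "transpose M ** N = mat 1" by (rule matrix_left_right_inverse1)
  then have "(transpose M ** N) $ k $ m = mat 1 $ k $ m" by simp
  then have "(\<Sum>i\<in>UNIV. real_of_int (r $ i $ k * r $ i $ m)) / real_of_int l = (if k = m then 1 else 0)"
    by (simp add: matrix_matrix_mult_def N_def M_def transpose_def sum_divide_distrib mat_def)
  then have "real_of_int (\<Sum>i\<in>UNIV. r $ i $ k * r $ i $ m) = real_of_int (if k = m then l else 0)"
    using lne by (auto simp: field_simps split: if_splits)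
  then show ?thesis by (simp only: of_int_eq_iff)
qed

end

definition Rm :: "int^4^4 \<Rightarrow> int^4 \<Rightarrow> int^4" where
  "Rm r z = (\<chi> i. \<Sum>k\<in>UNIV. r $ i $ k * z $ k)"

lemma Rm_nth[simp]: "Rm r z $ i = (\<Sum>k\<in>UNIV. r $ i $ k * z $ k)"
  by (simp add: Rm_def)

context hc begin

lemma mem_tH:
  assumes t: "t > 0"
  shows "((\<chi> j. real_of_int (z $ j)) \<in> (\<lambda>x. real t *\<^sub>R x) ` hypercube r) \<longleftrightarrow>
         (\<forall>i. 0 \<le> Rm r z $ i \<and> Rm r z $ i \<le> int t * l)"
proof
  assume "(\<chi> j. real_of_int (z $ j)) \<in> (\<lambda>x. real t *\<^sub>R x) ` hypercube r"
  then obtain s :: "real^4" where s01: "\<forall>i. 0 \<le> s $ i \<and> s $ i \<le> 1"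
    and zeq: "(\<chi> j. real_of_int (z $ j)) = real t *\<^sub>R (\<Sum>i\<in>UNIV. s $ i *\<^sub>R (\<chi> j. real_of_int (r $ i $ j)))"
    unfolding hypercube_def by auto
  have zk: "real_of_int (z $ k) = real t * (\<Sum>i\<in>UNIV. s $ i * real_of_int (r $ i $ k))" for k
  proof -
    have "(\<chi> j. real_of_int (z $ j)) $ k = (real t *\<^sub>R (\<Sum>i\<in>UNIV. s $ i *\<^sub>R (\<chi> j. real_of_int (r $ i $ j)))) $ k"
      using zeq by simp
    then show ?thesis by (simp add: sum_component)
  qed
  have key: "real_of_int (Rm r z $ j) = real t * s $ j * real_of_int l" for j
  proof -
    have "real_of_int (Rm r z $ j) = (\<Sum>k\<in>UNIV. real_of_int (r $ j $ k) * real_of_int (z $ k))"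
      by simp
    also have "\<dots> = (\<Sum>k\<in>UNIV. real_of_int (r $ j $ k) * (real t * (\<Sum>i\<in>UNIV. s $ i * real_of_int (r $ i $ k))))"
      by (simp add: zk)
    also have "\<dots> = (\<Sum>k\<in>UNIV. \<Sum>i\<in>UNIV. real t * (s $ i * (real_of_int (r $ i $ k) * real_of_int (r $ j $ k))))"
      by (simp add: sum_distrib_left mult_ac)
    also have "\<dots> = (\<Sum>i\<in>UNIV. \<Sum>k\<in>UNIV. real t * (s $ i * (real_of_int (r $ i $ k) * real_of_int (r $ j $ k))))"
      by (rule sum.swap)
    also have "\<dots> = real t * (\<Sum>i\<in>UNIV. s $ i * (\<Sum>k\<in>UNIV. real_of_int (r $ i $ k * r $ j $ k)))"
      by (simp only: sum_distrib_left of_int_mult)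
    also have "\<dots> = real t * (\<Sum>i\<in>UNIV. s $ i * real_of_int (if i = j then l else 0))"
      by (simp only: of_int_sum[symmetric] orth)
    also have "\<dots> = real t * (\<Sum>i\<in>UNIV. if i = j then s $ i * real_of_int l else 0)"
      by (intro arg_cong[where f="\<lambda>x. real t * x"] sum.cong) auto
    also have "\<dots> = real t * s $ j * real_of_int l"
      by simp
    finally show ?thesis .
  qed
  show "\<forall>i. 0 \<le> Rm r z $ i \<and> Rm r z $ i \<le> int t * l"
  proof
    fix i
    have a: "0 \<le> real t * s $ i * real_of_int l" using s01 l_pos by simp
    have b: "real t * s $ i * real_of_int l \<le> real t * 1 * real_of_int l"
      using s01 l_pos by (intro mult_right_mono mult_left_mono) auto
    have "real_of_int (Rm r z $ i) \<ge> 0" "real_of_int (Rm r z $ i) \<le> real_of_int (int t * l)"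
      using a b key[of i] by auto
    then show "0 \<le> Rm r z $ i \<and> Rm r z $ i \<le> int t * l" by linarith
  qed
next
  assume H: "\<forall>i. 0 \<le> Rm r z $ i \<and> Rm r z $ i \<le> int t * l"
  have tl: "real t * real_of_int l > 0" using t l_pos by simp
  define s :: "real^4" where "s = (\<chi> i. real_of_int (Rm r z $ i) / (real t * real_of_int l))"
  have s01: "\<forall>i. 0 \<le> s $ i \<and> s $ i \<le> 1"
  proof
    fix i
    have h1: "real_of_int (Rm r z $ i) \<le> real_of_int (int t * l)"
      using H[rule_format, of i] by (simp only: of_int_le_iff)
    have "real_of_int (Rm r z $ i) \<ge> 0" "real_of_int (Rm r z $ i) \<le> real t * real_of_int l"
      using H[rule_format, of i] h1 by (simp_all del: Rm_nth)
    then show "0 \<le> s $ i \<and> s $ i \<le> 1" using tl by (simp add: s_def field_simps)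
  qed
  have "(\<chi> j. real_of_int (z $ j)) = real t *\<^sub>R (\<Sum>i\<in>UNIV. s $ i *\<^sub>R (\<chi> j. real_of_int (r $ i $ j)))"
  proof -
    have "real_of_int (z $ k) = real t * (\<Sum>i\<in>UNIV. s $ i * real_of_int (r $ i $ k))" for k
    proof -
      have "real t * (\<Sum>i\<in>UNIV. s $ i * real_of_int (r $ i $ k))
          = (\<Sum>i\<in>UNIV. real t * (s $ i * real_of_int (r $ i $ k)))"
        by (simp add: sum_distrib_left)
      also have "\<dots> = (\<Sum>i\<in>UNIV. real_of_int (Rm r z $ i) * real_of_int (r $ i $ k) / real_of_int l)"
        by (rule sum.cong) (use t l_pos in \<open>auto simp: s_def field_simps simp del: Rm_nth\<close>)
      also have "\<dots> = (\<Sum>i\<in>UNIV. real_of_int (Rm r z $ i) * real_of_int (r $ i $ k)) / real_of_int l"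
        by (simp add: sum_divide_distrib del: Rm_nth)
      also have "\<dots> = (\<Sum>i\<in>UNIV. \<Sum>m\<in>UNIV. real_of_int (z $ m) * (real_of_int (r $ i $ m) * real_of_int (r $ i $ k))) / real_of_int l"
        by (simp add: sum_distrib_left sum_distrib_right mult_ac)
      also have "\<dots> = (\<Sum>m\<in>UNIV. \<Sum>i\<in>UNIV. real_of_int (z $ m) * (real_of_int (r $ i $ m) * real_of_int (r $ i $ k))) / real_of_int l"
        by (subst sum.swap) (rule refl)
      also have "\<dots> = (\<Sum>m\<in>UNIV. real_of_int (z $ m) * real_of_int (\<Sum>i\<in>UNIV. r $ i $ m * r $ i $ k)) / real_of_int l"
        by (simp only: sum_distrib_left of_int_mult of_int_sum)
      also have "\<dots> = (\<Sum>m\<in>UNIV. real_of_int (z $ m) * real_of_int (if m = k then l else 0)) / real_of_int l"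
        by (simp only: col_orth)
      also have "\<dots> = (\<Sum>m\<in>UNIV. if m = k then real_of_int (z $ m) * real_of_int l else 0) / real_of_int l"
        by (intro arg_cong[where f="\<lambda>x. x / real_of_int l"] sum.cong) auto
      also have "\<dots> = real_of_int (z $ k)"
        using l_pos by simp
      finally show ?thesis by simp
    qed
    then show ?thesis by (simp add: vec_eq_iff sum_component)
  qed
  then show "(\<chi> j. real_of_int (z $ j)) \<in> (\<lambda>x. real t *\<^sub>R x) ` hypercube r"
    unfolding hypercube_def using s01 by blast
qed

end

lemma vecset_eq: "{v::'a^'n. \<forall>i. v $ i \<in> A i} = vec_lambda ` (Pi\<^sub>E UNIV A)"
proof (intro set_eqI iffI)
  fix v :: "'a^'n" assume "v \<in> {v. \<forall>i. v $ i \<in> A i}"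
  then have "vec_nth v \<in> Pi\<^sub>E UNIV A" by auto
  then show "v \<in> vec_lambda ` (Pi\<^sub>E UNIV A)" by (metis image_eqI vec_nth_inverse)
qed auto

lemma card_vecset:
  assumes "\<And>i. finite (A i)"
  shows "card {v::'a^'n::finite. \<forall>i. v $ i \<in> A i} = (\<Prod>i\<in>UNIV. card (A i))"
    and "finite {v::'a^'n::finite. \<forall>i. v $ i \<in> A i}"
proof -
  have inj: "inj_on vec_lambda (Pi\<^sub>E (UNIV::'n set) A)"
    by (rule inj_onI) (simp add: vec_lambda_inject)
  show "card {v::'a^'n::finite. \<forall>i. v $ i \<in> A i} = (\<Prod>i\<in>UNIV. card (A i))"
    unfolding vecset_eq card_image[OF inj] by (simp add: card_PiE)
  show "finite {v::'a^'n::finite. \<forall>i. v $ i \<in> A i}"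
    unfolding vecset_eq using assms by (intro finite_imageI finite_PiE) auto
qed

definition Lat :: "int^4^4 \<Rightarrow> (int^4) set" where "Lat r = range (Rm r)"
definition Fund :: "int^4^4 \<Rightarrow> int \<Rightarrow> (int^4) set" where
  "Fund r l = {y \<in> Lat r. \<forall>i. 0 \<le> y $ i \<and> y $ i < l}"
definition BoxL :: "int^4^4 \<Rightarrow> int \<Rightarrow> nat \<Rightarrow> (int^4) set" where
  "BoxL r l t = {y \<in> Lat r. \<forall>i. 0 \<le> y $ i \<and> y $ i \<le> int t * l}"

context hc begin

lemma Rm_inv: "(\<Sum>i\<in>UNIV. r $ i $ k * Rm r z $ i) = l * z $ k"
proof -
  have "(\<Sum>i\<in>UNIV. r $ i $ k * Rm r z $ i) = (\<Sum>i\<in>UNIV. \<Sum>m\<in>UNIV. z $ m * (r $ i $ m * r $ i $ k))"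
    by (simp add: sum_distrib_left mult_ac)
  also have "\<dots> = (\<Sum>m\<in>UNIV. \<Sum>i\<in>UNIV. z $ m * (r $ i $ m * r $ i $ k))"
    by (rule sum.swap)
  also have "\<dots> = (\<Sum>m\<in>UNIV. z $ m * (if m = k then l else 0))"
    by (simp only: sum_distrib_left[symmetric] col_orth)
  also have "\<dots> = (\<Sum>m\<in>UNIV. if m = k then z $ m * l else 0)"
    by (rule sum.cong) auto
  finally show ?thesis by simp
qed

lemma Rm_inj: "inj (Rm r)"
proof (rule injI)
  fix z z' assume "Rm r z = Rm r z'"
  then have "l * z $ k = l * z' $ k" for k using Rm_inv[of k z] Rm_inv[of k z'] by simp
  then show "z = z'" using l_pos by (simp add: vec_eq_iff)
qed

lemma lattice_count_eq:
  assumes "t > 0"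
  shows "lattice_count (hypercube r) t = card (BoxL r l t)"
proof -
  have "lattice_count (hypercube r) t = card {z. \<forall>i. 0 \<le> Rm r z $ i \<and> Rm r z $ i \<le> int t * l}"
    unfolding lattice_count_def using mem_tH[OF assms] by simp
  also have "\<dots> = card (Rm r ` {z. \<forall>i. 0 \<le> Rm r z $ i \<and> Rm r z $ i \<le> int t * l})"
    by (rule card_image[symmetric]) (rule inj_on_subset[OF Rm_inj], simp)
  also have "Rm r ` {z. \<forall>i. 0 \<le> Rm r z $ i \<and> Rm r z $ i \<le> int t * l} = BoxL r l t"
    unfolding BoxL_def Lat_def by (auto simp del: Rm_nth)
  finally show ?thesis .
qed

lemma Rm_row: "Rm r (r $ j) $ i = (if i = j then l else 0)"
  using orth[of i j] by simp

lemma Lat_shift: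
  assumes "y \<in> Lat r" shows "(\<chi> i. y $ i + l * w $ i) \<in> Lat r"
proof -
  obtain z where z: "y = Rm r z" using assms unfolding Lat_def by auto
  define z' where "z' = z + (\<Sum>j\<in>UNIV. w $ j *s r $ j)"
  have "Rm r z' $ i = y $ i + l * w $ i" for i
  proof -
    have "Rm r z' $ i = Rm r z $ i + (\<Sum>k\<in>UNIV. r $ i $ k * (\<Sum>j\<in>UNIV. w $ j * r $ j $ k))"
      by (simp add: z'_def sum_component algebra_simps sum.distrib)
    also have "(\<Sum>k\<in>UNIV. r $ i $ k * (\<Sum>j\<in>UNIV. w $ j * r $ j $ k))
        = (\<Sum>k\<in>UNIV. \<Sum>j\<in>UNIV. w $ j * (r $ i $ k * r $ j $ k))"
      by (simp add: sum_distrib_left mult_ac)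
    also have "\<dots> = (\<Sum>j\<in>UNIV. \<Sum>k\<in>UNIV. w $ j * (r $ i $ k * r $ j $ k))"
      by (rule sum.swap)
    also have "\<dots> = (\<Sum>j\<in>UNIV. w $ j * (if i = j then l else 0))"
      by (simp only: sum_distrib_left[symmetric] orth)
    also have "\<dots> = (\<Sum>j\<in>UNIV. if j = i then w $ j * l else 0)"
      by (rule sum.cong) auto
    finally show ?thesis using z by simp
  qed
  then have "(\<chi> i. y $ i + l * w $ i) = Rm r z'" by (simp add: vec_eq_iff del: Rm_nth)
  then show ?thesis unfolding Lat_def by simp
qed

lemma Rm_add: "Rm r (z + z') = Rm r z + Rm r z'"
proof -
  have "Rm r (z + z') $ i = (Rm r z + Rm r z') $ i" for i
    by (simp add: distrib_left sum.distrib)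
  then show ?thesis by (simp add: vec_eq_iff del: Rm_nth)
qed
lemma Rm_diff: "Rm r (z - z') = Rm r z - Rm r z'"
proof -
  have "Rm r (z - z') $ i = (Rm r z - Rm r z') $ i" for i
    by (simp add: right_diff_distrib sum_subtractf)
  then show ?thesis by (simp add: vec_eq_iff del: Rm_nth)
qed

lemma Lat_add: assumes "y \<in> Lat r" "y' \<in> Lat r" shows "y + y' \<in> Lat r"
proof -
  obtain z z' where "y = Rm r z" "y' = Rm r z'" using assms unfolding Lat_def by auto
  then have "y + y' = Rm r (z + z')" by (simp only: Rm_add)
  then show ?thesis unfolding Lat_def by (rule range_eqI)
qed
lemma Lat_diff: assumes "y \<in> Lat r" "y' \<in> Lat r" shows "y - y' \<in> Lat r"
proof -
  obtain z z' where "y = Rm r z" "y' = Rm r z'" using assms unfolding Lat_def by auto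
  then have "y - y' = Rm r (z - z')" by (simp only: Rm_diff)
  then show ?thesis unfolding Lat_def by (rule range_eqI)
qed

lemma Lat_mod: assumes "y \<in> Lat r" shows "(\<chi> i. y $ i mod l) \<in> Lat r"
proof -
  have "(\<chi> i. y $ i mod l) = (\<chi> i. y $ i + l * (\<chi> i. - (y $ i div l)) $ i)"
    by (simp add: vec_eq_iff) (metis minus_div_mult_eq_mod mult.commute)
  then show ?thesis using Lat_shift[OF assms, of "\<chi> i. - (y $ i div l)"] by metis
qed

end

context hc begin

lemma finite_BoxL: "finite (BoxL r l t)"
proof -
  have "BoxL r l t \<subseteq> {v. \<forall>i. v $ i \<in> {0..int t * l}}" unfolding BoxL_def by auto
  then show ?thesis using card_vecset(2)[of "\<lambda>_. {0..int t * l}"] finite_subset by blast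
qed

lemma finite_Fund: "finite (Fund r l)"
proof -
  have "Fund r l \<subseteq> {v. \<forall>i. v $ i \<in> {0..l}}" unfolding Fund_def by fastforce
  then show ?thesis using card_vecset(2)[of "\<lambda>_. {0..l}"] finite_subset by blast
qed

lemma fiber_card:
  assumes rho: "\<rho> \<in> Fund r l"
  shows "card {y. y \<in> BoxL r l t \<and> (\<chi> i. y $ i mod l) = \<rho>} = (\<Prod>i\<in>UNIV. t + (if \<rho> $ i = 0 then 1 else 0))"
proof -
  define b where "b i = (if \<rho> $ i = 0 then int t else int t - 1)" for i
  define Q where "Q = {q::int^4. \<forall>i. q $ i \<in> {0..b i}}"
  define f where "f q = (\<chi> i. \<rho> $ i + l * q $ i)" for q :: "int^4"
  have rl: "\<rho> \<in> Lat r" "\<And>i. 0 \<le> \<rho> $ i" "\<And>i. \<rho> $ i < l" using rho unfolding Fund_def by auto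
  have "{y. y \<in> BoxL r l t \<and> (\<chi> i. y $ i mod l) = \<rho>} = f ` Q"
  proof (intro set_eqI iffI)
    fix y assume "y \<in> {y. y \<in> BoxL r l t \<and> (\<chi> i. y $ i mod l) = \<rho>}"
    then have yL: "y \<in> Lat r" and yb: "\<And>i. 0 \<le> y $ i \<and> y $ i \<le> int t * l"
      and ym: "\<And>i. y $ i mod l = \<rho> $ i" unfolding BoxL_def by (auto simp: vec_eq_iff)
    define q where "q = (\<chi> i. y $ i div l)"
    have yq: "y $ i = \<rho> $ i + l * q $ i" for i
      using ym[of i] div_mult_mod_eq[of "y $ i" l] by (simp add: q_def algebra_simps)
    have "q $ i \<in> {0..b i}" for i
    proof -
      have q0: "0 \<le> q $ i" using yb[of i] l_pos by (simp add: q_def pos_imp_zdiv_nonneg_iff)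
      have "l * q $ i \<le> l * int t - \<rho> $ i" using yq[of i] yb[of i] by (simp add: algebra_simps)
      then have "q $ i \<le> b i"
      proof (cases "\<rho> $ i = 0")
        case True
        then have "l * q $ i \<le> l * int t" using \<open>l * q $ i \<le> l * int t - \<rho> $ i\<close> by simp
        then show ?thesis using True l_pos by (simp add: b_def)
      next
        case False
        then have "l * q $ i < l * int t" using \<open>l * q $ i \<le> l * int t - \<rho> $ i\<close> rl(2)[of i]
          by (smt (verit))
        then have "q $ i < int t" using l_pos by (simp add: mult_less_cancel_left_pos)
        then show ?thesis using False by (simp add: b_def)
      qed
      then show ?thesis using q0 by simp
    qed
    then have "q \<in> Q" unfolding Q_def by blast
    moreover have "y = f q" using yq by (simp add: f_def vec_eq_iff)
    ultimately show "y \<in> f ` Q" by blast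
  next
    fix y assume "y \<in> f ` Q"
    then obtain q where q: "q \<in> Q" and y: "y = f q" by blast
    have qb: "0 \<le> q $ i" "q $ i \<le> b i" for i using q unfolding Q_def by auto
    have "y \<in> Lat r" using Lat_shift[OF rl(1), of q] y by (simp add: f_def)
    moreover have "0 \<le> y $ i \<and> y $ i \<le> int t * l" for i
    proof
      show "0 \<le> y $ i" using y rl(2)[of i] qb(1)[of i] l_pos by (simp add: f_def)
      show "y $ i \<le> int t * l"
      proof (cases "\<rho> $ i = 0")
        case True
        then have "q $ i \<le> int t" using qb(2)[of i] by (simp add: b_def)
        then have "l * q $ i \<le> l * int t" using l_pos by simp
        then show ?thesis using True y by (simp add: f_def mult.commute)
      next
        case False
        then have "q $ i \<le> int t - 1" using qb(2)[of i] by (simp add: b_def)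
        then have "l * q $ i \<le> l * (int t - 1)" using l_pos by simp
        then show ?thesis using y rl(3)[of i] by (simp add: f_def algebra_simps)
      qed
    qed
    moreover have "(\<chi> i. y $ i mod l) = \<rho>"
      using y rl(2,3) by (simp add: f_def vec_eq_iff)
    ultimately show "y \<in> {y. y \<in> BoxL r l t \<and> (\<chi> i. y $ i mod l) = \<rho>}"
      unfolding BoxL_def by blast
  qed
  moreover have "inj_on f Q"
  proof (rule inj_onI)
    fix q q' assume "f q = f q'"
    then have "l * q $ i = l * q' $ i" for i by (auto simp: f_def vec_eq_iff)
    then show "q = q'" using l_pos by (simp add: vec_eq_iff)
  qed
  ultimately have "card {y. y \<in> BoxL r l t \<and> (\<chi> i. y $ i mod l) = \<rho>} = card Q"
    by (simp add: card_image)
  also have "\<dots> = (\<Prod>i\<in>UNIV. card {0..b i})" unfolding Q_def by (rule card_vecset(1)) simp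
  also have "\<dots> = (\<Prod>i\<in>UNIV. t + (if \<rho> $ i = 0 then 1 else 0))"
    by (rule prod.cong) (auto simp: b_def)
  finally show ?thesis .
qed

lemma card_BoxL:
  "card (BoxL r l t) = (\<Sum>\<rho>\<in>Fund r l. \<Prod>i\<in>UNIV. t + (if \<rho> $ i = 0 then 1 else 0))"
proof -
  define md where "md y = (\<chi> i. y $ i mod l)" for y :: "int^4"
  have sub: "md ` BoxL r l t \<subseteq> Fund r l"
    unfolding md_def BoxL_def Fund_def using Lat_mod l_pos by auto
  have "card (BoxL r l t) = (\<Sum>\<rho>\<in>Fund r l. card {y. y \<in> BoxL r l t \<and> md y = \<rho>})"
    using sum.group[OF finite_BoxL finite_Fund sub, of "\<lambda>_. (1::nat)"] by simp
  also have "\<dots> = (\<Sum>\<rho>\<in>Fund r l. \<Prod>i\<in>UNIV. t + (if \<rho> $ i = 0 then 1 else 0))"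
    by (rule sum.cong[OF refl]) (simp add: md_def fiber_card)
  finally show ?thesis .
qed

end

lemma prod_lin_coeffs:
  fixes c :: "'a \<Rightarrow> real"
  assumes "finite A"
  shows "(\<forall>k>card A. coeff (\<Prod>i\<in>A. [:c i, 1:]) k = 0) \<and> coeff (\<Prod>i\<in>A. [:c i, 1:]) (card A) = 1
    \<and> coeff (\<Prod>i\<in>A. [:c i, 1:]) (card A - 1) = (if A = {} then 1 else (\<Sum>i\<in>A. c i))"
  using assms
proof (induction A rule: finite_induct)
  case empty
  then show ?case by simp
next
  case (insert a A)
  define P where "P = (\<Prod>i\<in>A. [:c i, 1:])"
  have P': "(\<Prod>i\<in>insert a A. [:c i, 1:]) = smult (c a) P + pCons 0 P"
    using insert by (simp add: P_def mult_pCons_left)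
  have cf: "coeff (\<Prod>i\<in>insert a A. [:c i, 1:]) k = c a * coeff P k + (if k = 0 then 0 else coeff P (k - 1))" for k
    unfolding P' by (cases k) auto
  have IH: "\<forall>k>card A. coeff P k = 0" "coeff P (card A) = 1"
     "coeff P (card A - 1) = (if A = {} then 1 else (\<Sum>i\<in>A. c i))"
    using insert.IH unfolding P_def by auto
  have ci: "card (insert a A) = Suc (card A)" using insert by simp
  show ?case
  proof (intro conjI allI impI)
    fix k assume "k > card (insert a A)"
    then show "coeff (\<Prod>i\<in>insert a A. [:c i, 1:]) k = 0" using IH(1) ci cf[of k] by auto
  next
    show "coeff (\<Prod>i\<in>insert a A. [:c i, 1:]) (card (insert a A)) = 1"
      using IH ci cf[of "Suc (card A)"] by simp
  next
    have "card A = 0 \<longleftrightarrow> A = {}" using insert by simp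
    then show "coeff (\<Prod>i\<in>insert a A. [:c i, 1:]) (card (insert a A) - 1) =
        (if insert a A = {} then 1 else (\<Sum>i\<in>insert a A. c i))"
      using IH ci cf[of "card A"] insert by (auto simp: algebra_simps)
  qed
qed

lemma bezout_sum:
  fixes f :: "'a \<Rightarrow> int"
  assumes "finite I"
  shows "\<exists>c. (\<Sum>k\<in>I. c k * f k) = Gcd (f ` I)"
  using assms
proof (induction I rule: finite_induct)
  case empty then show ?case by simp
next
  case (insert a I)
  then obtain c where c: "(\<Sum>k\<in>I. c k * f k) = Gcd (f ` I)" by blast
  obtain u v where uv: "u * f a + v * Gcd (f ` I) = gcd (f a) (Gcd (f ` I))" using bezout_int by blast
  define c' where "c' k = (if k = a then u else v * c k)" for k
  have "(\<Sum>k\<in>insert a I. c' k * f k) = u * f a + (\<Sum>k\<in>I. v * (c k * f k))"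
    using insert by (simp add: c'_def mult_ac cong: sum.cong) (rule sum.cong, auto)
  also have "\<dots> = u * f a + v * Gcd (f ` I)" by (simp add: sum_distrib_left[symmetric] c)
  finally show ?case using uv by auto
qed

context hc begin

lemma row_facts:
  shows "row_gcd r i > 0" "row_gcd r i dvd l" "\<And>k. row_gcd r i dvd r $ i $ k"
    "\<exists>c. (\<Sum>k\<in>UNIV. c k * r $ i $ k) = row_gcd r i"
proof -
  show dk: "\<And>k. row_gcd r i dvd r $ i $ k" unfolding row_gcd_def by (simp add: Gcd_dvd)
  have "l = (\<Sum>k\<in>UNIV. r $ i $ k * r $ i $ k)" using orth[of i i] by simp
  then show "row_gcd r i dvd l" using dk by (simp add: dvd_sum)
  show "\<exists>c. (\<Sum>k\<in>UNIV. c k * r $ i $ k) = row_gcd r i"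
    unfolding row_gcd_def using bezout_sum[of UNIV "\<lambda>k. r $ i $ k"] by simp
  have ge: "row_gcd r i \<ge> 0" unfolding row_gcd_def by (rule Gcd_int_greater_eq_0)
  have "row_gcd r i \<noteq> 0"
  proof
    assume "row_gcd r i = 0"
    then have "\<And>k. r $ i $ k = 0" unfolding row_gcd_def by (auto simp: Gcd_0_iff)
    then have "l = 0" using orth[of i i] by simp
    then show False using l_pos by simp
  qed
  then show "row_gcd r i > 0" using ge by simp
qed

lemma fiber_eq:
  assumes v: "v \<in> (\<lambda>\<rho>. \<rho> $ i) ` Fund r l"
  shows "card {\<rho> \<in> Fund r l. \<rho> $ i = v} = card {\<rho> \<in> Fund r l. \<rho> $ i = 0}"
proof -
  obtain \<rho>0 where r0: "\<rho>0 \<in> Fund r l" "\<rho>0 $ i = v" using v by blast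
  define g where "g \<rho> = (\<chi> j. (\<rho> $ j + \<rho>0 $ j) mod l)" for \<rho> :: "int^4"
  define g' where "g' \<rho> = (\<chi> j. (\<rho> $ j - \<rho>0 $ j) mod l)" for \<rho> :: "int^4"
  have r0L: "\<rho>0 \<in> Lat r" using r0 unfolding Fund_def by auto
  have gF: "g \<rho> \<in> Fund r l" if "\<rho> \<in> Fund r l" for \<rho>
  proof -
    have "\<rho> + \<rho>0 \<in> Lat r" using that r0L Lat_add unfolding Fund_def by auto
    then have "(\<chi> j. (\<rho> + \<rho>0) $ j mod l) \<in> Lat r" by (rule Lat_mod)
    then show ?thesis using l_pos unfolding Fund_def g_def by auto
  qed
  have g'F: "g' \<rho> \<in> Fund r l" if "\<rho> \<in> Fund r l" for \<rho>
  proof -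
    have "\<rho> - \<rho>0 \<in> Lat r" using that r0L Lat_diff unfolding Fund_def by auto
    then have "(\<chi> j. (\<rho> - \<rho>0) $ j mod l) \<in> Lat r" by (rule Lat_mod)
    then show ?thesis using l_pos unfolding Fund_def g'_def by auto
  qed
  have small: "\<rho> $ j mod l = \<rho> $ j" if "\<rho> \<in> Fund r l" for \<rho> j
    using that unfolding Fund_def by auto
  have "bij_betw g {\<rho> \<in> Fund r l. \<rho> $ i = 0} {\<rho> \<in> Fund r l. \<rho> $ i = v}"
  proof (rule bij_betw_byWitness[where f'=g'])
    show "\<forall>a\<in>{\<rho> \<in> Fund r l. \<rho> $ i = 0}. g' (g a) = a"
      using small by (auto simp: g_def g'_def vec_eq_iff mod_diff_left_eq)
    show "\<forall>a\<in>{\<rho> \<in> Fund r l. \<rho> $ i = v}. g (g' a) = a"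
      using small by (auto simp: g_def g'_def vec_eq_iff mod_add_left_eq)
    show "g ` {\<rho> \<in> Fund r l. \<rho> $ i = 0} \<subseteq> {\<rho> \<in> Fund r l. \<rho> $ i = v}"
      using gF r0 small[OF r0(1), of i] by (auto simp: g_def)
    show "g' ` {\<rho> \<in> Fund r l. \<rho> $ i = v} \<subseteq> {\<rho> \<in> Fund r l. \<rho> $ i = 0}"
      using g'F r0 by (auto simp: g'_def)
  qed
  then show ?thesis by (simp add: bij_betw_same_card)
qed

lemma image_coord:
  "(\<lambda>\<rho>. \<rho> $ i) ` Fund r l = (\<lambda>m. row_gcd r i * m) ` {0..<l div row_gcd r i}"
proof -
  define D where "D = row_gcd r i"
  have D: "D > 0" "D dvd l" "\<And>k. D dvd r $ i $ k" using row_facts unfolding D_def by auto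
  obtain c where c: "(\<Sum>k\<in>UNIV. c k * r $ i $ k) = D" using row_facts unfolding D_def by blast
  have lD: "l = D * (l div D)" using D by simp
  show ?thesis unfolding D_def[symmetric]
  proof (intro set_eqI iffI)
    fix v assume "v \<in> (\<lambda>\<rho>. \<rho> $ i) ` Fund r l"
    then obtain \<rho> where \<rho>: "\<rho> \<in> Fund r l" "v = \<rho> $ i" by blast
    then obtain z where "\<rho> = Rm r z" unfolding Fund_def Lat_def by auto
    then have "D dvd v" using \<rho>(2) D(3) by (simp add: dvd_sum)
    then obtain m where m: "v = D * m" by blast
    have "0 \<le> v" "v < l" using \<rho> unfolding Fund_def by auto
    then have "0 \<le> m" "m < l div D" using m D(1) lD
      by (simp_all add: zero_le_mult_iff) (metis mult_less_cancel_left_pos)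
    then show "v \<in> (\<lambda>m. D * m) ` {0..<l div D}" using m by auto
  next
    fix v assume "v \<in> (\<lambda>m. D * m) ` {0..<l div D}"
    then obtain m where m0: "m \<in> {0..<l div D}" "v = D * m" by (rule imageE)
    then have m: "v = D * m" "0 \<le> m" "m < l div D" by auto
    have v0: "0 \<le> v" using m D(1) by simp
    have "D * m < D * (l div D)" using m D(1) by simp
    then have vl: "v < l" using m lD by simp
    define z where "z = (\<chi> k. m * c k)"
    have "Rm r z $ i = v" using c m by (simp add: z_def sum_distrib_left[symmetric] mult_ac)
    have "(\<chi> j. Rm r z $ j mod l) \<in> Lat r" by (rule Lat_mod) (simp add: Lat_def)
    moreover have "(\<chi> j. Rm r z $ j mod l) $ i = v" using \<open>Rm r z $ i = v\<close> v0 vl by simp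
    ultimately have "(\<chi> j. Rm r z $ j mod l) \<in> Fund r l" "(\<chi> j. Rm r z $ j mod l) $ i = v"
      unfolding Fund_def using l_pos by auto
    then show "v \<in> (\<lambda>\<rho>. \<rho> $ i) ` Fund r l" by (metis image_eqI)
  qed
qed

lemma card_Fund_fiber:
  "int (card (Fund r l)) = (l div row_gcd r i) * int (card {\<rho> \<in> Fund r l. \<rho> $ i = 0})"
proof -
  define D where "D = row_gcd r i"
  have D: "D > 0" "D dvd l" using row_facts unfolding D_def by auto
  define img where "img = (\<lambda>\<rho>. \<rho> $ i) ` Fund r l"
  have fimg: "finite img" unfolding img_def using finite_Fund by simp
  have "card (Fund r l) = (\<Sum>v\<in>img. card {\<rho>. \<rho> \<in> Fund r l \<and> \<rho> $ i = v})"
    using sum.group[OF finite_Fund fimg, of "\<lambda>\<rho>. \<rho> $ i" "\<lambda>_. (1::nat)"] unfolding img_def by simp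
  also have "\<dots> = (\<Sum>v\<in>img. card {\<rho> \<in> Fund r l. \<rho> $ i = 0})"
    by (rule sum.cong[OF refl]) (use fiber_eq in \<open>auto simp: img_def\<close>)
  also have "\<dots> = card img * card {\<rho> \<in> Fund r l. \<rho> $ i = 0}" by simp
  finally have 1: "card (Fund r l) = card img * card {\<rho> \<in> Fund r l. \<rho> $ i = 0}" .
  have "inj_on (\<lambda>m. D * m) {0..<l div D}" using D by (auto intro: inj_onI)
  then have "card img = nat (l div D)"
    unfolding img_def image_coord D_def[symmetric] by (simp add: card_image)
  moreover have "l div D \<ge> 0" using D l_pos by (simp add: pos_imp_zdiv_nonneg_iff)
  ultimately show ?thesis using 1 unfolding D_def by simp
qed

end

theorem proposition2p16:
  fixes l :: int and r :: "int^4^4" and E :: "real poly"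
  assumes l_pos: "l > 0"
    and orth: "\<forall>i j. (\<Sum>k\<in>UNIV. r $ i $ k * r $ j $ k) = (if i = j then l else 0)"
    and gcd1: "Gcd (range (row_gcd r)) = 1"
    and ehrhart: "\<forall>t::nat. t > 0 \<longrightarrow> real (lattice_count (hypercube r) t) = poly E (real t)"
    and shape: "degree E = 4" "coeff E 4 = real_of_int (l^2)" "coeff E 0 = 1"
  shows "coeff E 3 = real_of_int (l * (\<Sum>i\<in>UNIV. row_gcd r i))"
proof -
  interpret hc l r using l_pos orth by unfold_locales auto
  define cr where "cr \<rho> i = (if \<rho> $ i = 0 then 1 else 0 :: real)" for \<rho> :: "int^4" and i :: 4
  define Q where "Q = (\<Sum>\<rho>\<in>Fund r l. \<Prod>i\<in>UNIV. [:cr \<rho> i, 1:])"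
  have evalQ: "poly Q (real t) = real (lattice_count (hypercube r) t)" if "t > 0" for t
  proof -
    have "real (lattice_count (hypercube r) t) = real (\<Sum>\<rho>\<in>Fund r l. \<Prod>i\<in>UNIV. t + (if \<rho> $ i = 0 then 1 else 0))"
      using lattice_count_eq[OF that] card_BoxL by simp
    also have "\<dots> = (\<Sum>\<rho>\<in>Fund r l. \<Prod>i\<in>UNIV. real t + cr \<rho> i)"
      by (simp add: of_nat_sum of_nat_prod cr_def if_distrib add.commute cong: if_cong)
    also have "\<dots> = poly Q (real t)"
      by (simp add: Q_def poly_sum poly_prod algebra_simps)
    finally show ?thesis by simp
  qed
  have EQ: "E = Q"
  proof (rule ccontr)
    assume "E \<noteq> Q"
    then have "E - Q \<noteq> 0" by simp
    then have fin: "finite {x. poly (E - Q) x = 0}" by (rule poly_roots_finite)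
    have "poly (E - Q) (real (Suc n)) = 0" for n
      using ehrhart evalQ[of "Suc n"] by (simp del: of_nat_Suc)
    then have "range (\<lambda>n. real (Suc n)) \<subseteq> {x. poly (E - Q) x = 0}"
      by blast
    moreover have "infinite (range (\<lambda>n. real (Suc n)))"
      by (rule range_inj_infinite) (auto intro: injI)
    ultimately show False using fin finite_subset by blast
  qed
  have cardU: "card (UNIV :: 4 set) = 4" by simp
  have pc: "coeff (\<Prod>i\<in>UNIV. [:cr \<rho> i, 1:]) 4 = 1" "coeff (\<Prod>i\<in>UNIV. [:cr \<rho> i, 1:]) 3 = (\<Sum>i\<in>UNIV. cr \<rho> i)" for \<rho>
    using prod_lin_coeffs[of "UNIV :: 4 set" "cr \<rho>"] cardU by auto
  have c4: "coeff Q 4 = real (card (Fund r l))" unfolding Q_def coeff_sum pc by simp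
  have c3: "coeff Q 3 = (\<Sum>\<rho>\<in>Fund r l. \<Sum>i\<in>UNIV. cr \<rho> i)" unfolding Q_def coeff_sum pc by simp
  have cF: "int (card (Fund r l)) = l^2"
    using c4 shape(2) EQ by (metis of_int_eq_iff of_int_of_nat_eq)
  have fib: "int (card {\<rho> \<in> Fund r l. \<rho> $ i = 0}) = l * row_gcd r i" for i
  proof -
    define D where "D = row_gcd r i"
    define m where "m = l div D"
    define c where "c = int (card {\<rho> \<in> Fund r l. \<rho> $ i = 0})"
    have D: "D > 0" "D dvd l" using row_facts unfolding D_def by auto
    have lm: "l = D * m" using D unfolding m_def by simp
    have m0: "m \<noteq> 0" using lm l_pos by auto
    have "m * c = l^2" using card_Fund_fiber[of i] cF unfolding c_def m_def D_def by simp
    also have "\<dots> = m * (l * D)" using lm by (simp add: power2_eq_square algebra_simps)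
    finally have "c = l * D" using m0 by simp
    then show ?thesis unfolding c_def D_def .
  qed
  have "coeff E 3 = (\<Sum>i\<in>UNIV. \<Sum>\<rho>\<in>Fund r l. cr \<rho> i)" using EQ c3 sum.swap by metis
  also have "\<dots> = (\<Sum>i\<in>UNIV. real (card {\<rho> \<in> Fund r l. \<rho> $ i = 0}))"
  proof (rule sum.cong[OF refl])
    fix i
    have "(\<Sum>\<rho>\<in>Fund r l. cr \<rho> i) = (\<Sum>\<rho>\<in>{\<rho> \<in> Fund r l. \<rho> $ i = 0}. 1)"
      unfolding cr_def using finite_Fund by (simp add: sum.If_cases Int_def Collect_conj_eq[symmetric])
    then show "(\<Sum>\<rho>\<in>Fund r l. cr \<rho> i) = real (card {\<rho> \<in> Fund r l. \<rho> $ i = 0})" by simp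
  qed
  also have "\<dots> = (\<Sum>i\<in>UNIV. real_of_int (l * row_gcd r i))"
  proof (rule sum.cong[OF refl])
    fix i
    have "real_of_int (int (card {\<rho> \<in> Fund r l. \<rho> $ i = 0})) = real_of_int (l * row_gcd r i)"
      using fib[of i] by (rule arg_cong)
    then show "real (card {\<rho> \<in> Fund r l. \<rho> $ i = 0}) = real_of_int (l * row_gcd r i)"
      by (simp only: of_int_of_nat_eq)
  qed
  also have "\<dots> = real_of_int (l * (\<Sum>i\<in>UNIV. row_gcd r i))"
    by (simp add: sum_distrib_left)
  finally show ?thesis .
qed

end
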